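(* Let $X$ be a Banach space as described in the context and let $f\in X$ be a function that is not a polynomial. If there exists a sequence $p_n\in\mathcal{P}_n[\mathbb{Z}]$ with $\lim_{n\to\infty}\|f-p_n\|=0$, then $\liminf_{n\to\infty}\|z^n\|=0$.
   Context: $\mathbb{D}=\{z\in\mathbb{C}:|z|<1\}$. $X$ is a complex Banach space of functions analytic in $\mathbb{D}$ whose norm $\|\cdot\|$ satisfies: (i) $\|f(\cdot\, e^{it})\|=\|f(\cdot)\|$ for all $t\in\mathbb{R}$ and $f\in X$; (ii) $\|f\|<\infty$ for every entire function $f$; (iii) for all $f\in X$ and $g\in L[0,2\pi]$, $\big\|\frac{1}{2\pi}\int_0^{2\pi} f(ze^{it})g(t)\,dt\big\|\le \frac{1}{2\pi}\int_0^{2\pi}|g(t)|\,dt\cdot\|f\|$. $\|z^n\|$ is the norm in $X$ of $z\mapsto z^n$. A complex number is called an integer if its real and imaginary parts are integers; $\mathcal{P}_n[\mathbb{Z}]$ is the set of complex polynomials of degree at most $n-1$ with integer coefficients in this sense. *)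

theory Defs
  imports "HOL-Analysis.Analysis" "HOL-Computational_Algebra.Polynomial"
begin

text \<open>Functions analytic in the unit disc are represented by functions
  complex \<Rightarrow> complex that vanish outside the open unit disc.\<close>

definition restrict_D :: "(complex \<Rightarrow> complex) \<Rightarrow> complex \<Rightarrow> complex" where
  "restrict_D f = (\<lambda>z. if z \<in> ball 0 1 then f z else 0)"

definition gauss_int :: "complex \<Rightarrow> bool" where
  "gauss_int c \<longleftrightarrow> Re c \<in> \<int> \<and> Im c \<in> \<int>"

definition int_polys :: "nat \<Rightarrow> complex poly set" where
  "int_polys n = {q. (\<forall>i. gauss_int (coeff q i)) \<and> (q = 0 \<or> degree q < n)}"

definition admissible_space :: "(complex \<Rightarrow> complex) set \<Rightarrow> ((complex \<Rightarrow> complex) \<Rightarrow> real) \<Rightarrow> bool" where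
  "admissible_space X N \<longleftrightarrow>
     \<comment> \<open>elements: analytic in the disc, represented as vanishing outside it\<close>
     (\<forall>f\<in>X. f holomorphic_on ball 0 1 \<and> (\<forall>z. z \<notin> ball 0 1 \<longrightarrow> f z = 0)) \<and>
     \<comment> \<open>complex vector space\<close>
     (\<lambda>z. 0) \<in> X \<and> (\<forall>f\<in>X. \<forall>g\<in>X. (\<lambda>z. f z + g z) \<in> X) \<and> (\<forall>c. \<forall>f\<in>X. (\<lambda>z. c * f z) \<in> X) \<and>
     \<comment> \<open>norm\<close>
     (\<forall>f\<in>X. N f \<ge> 0) \<and> (\<forall>f\<in>X. N f = 0 \<longleftrightarrow> f = (\<lambda>z. 0)) \<and>
     (\<forall>c. \<forall>f\<in>X. N (\<lambda>z. c * f z) = cmod c * N f) \<and>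
     (\<forall>f\<in>X. \<forall>g\<in>X. N (\<lambda>z. f z + g z) \<le> N f + N g) \<and>
     \<comment> \<open>completeness\<close>
     (\<forall>F. (\<forall>n. F n \<in> X) \<longrightarrow>
          (\<forall>e>0. \<exists>M. \<forall>m\<ge>M. \<forall>n\<ge>M. N (\<lambda>z. F m z - F n z) < e) \<longrightarrow>
          (\<exists>f\<in>X. (\<lambda>n. N (\<lambda>z. F n z - f z)) \<longlonglongrightarrow> 0)) \<and>
     \<comment> \<open>(i) rotation invariance\<close>
     (\<forall>f\<in>X. \<forall>t::real. (\<lambda>z. f (z * cis t)) \<in> X \<and> N (\<lambda>z. f (z * cis t)) = N f) \<and>
     \<comment> \<open>(ii) entire functions belong to X (have finite norm)\<close>
     (\<forall>f. f holomorphic_on UNIV \<longrightarrow> restrict_D f \<in> X) \<and>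
     \<comment> \<open>(iii) convolution estimate\<close>
     (\<forall>f\<in>X. \<forall>g :: real \<Rightarrow> complex. set_integrable lborel {0..2*pi} g \<longrightarrow>
        (let h = restrict_D (\<lambda>z. (1 / (2*pi)) * (LINT t:{0..2*pi}|lborel. f (z * cis t) * g t))
         in h \<in> X \<and> N h \<le> (1 / (2*pi)) * (LINT t:{0..2*pi}|lborel. cmod (g t)) * N f))"

end

theory Submission
  imports Defs
begin
lemma cis_int_integral:
  fixes m :: int
  shows "((\<lambda>t. cis (of_int m * t)) has_integral (if m = 0 then 2*pi else 0)) {0..2*pi}"
proof (cases "m = 0")
  case True
  then show ?thesis using has_integral_const[of "1::complex" 0 "2*pi"]
    by (simp add: scaleR_conv_of_real)
next
  case False
  have d: "((\<lambda>t. cis (of_int m * t) / (\<i> * of_int m)) has_vector_derivative cis (of_int m * t)) (at t within {0..2*pi})" for t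
  proof -
    have "((\<lambda>t. cis (of_int m * t)) has_vector_derivative (\<i> * of_int m * cis (of_int m * t))) (at t within {0..2*pi})"
    proof -
      have "((\<lambda>w. exp (\<i> * of_int m * w)) has_field_derivative (\<i> * of_int m * exp (\<i> * of_int m * of_real t))) (at (of_real t))"
        by (auto intro!: derivative_eq_intros)
      from has_vector_derivative_real_field[OF this]
      show ?thesis by (simp add: cis_conv_exp mult.assoc)
    qed
    then have "((\<lambda>t. cis (of_int m * t) / (\<i> * of_int m)) has_vector_derivative (\<i> * of_int m * cis (of_int m * t)) / (\<i> * of_int m)) (at t within {0..2*pi})"
      by (intro derivative_eq_intros) auto
    then show ?thesis using False by simp
  qed
  have "((\<lambda>t. cis (of_int m * t)) has_integral (cis (of_int m * (2*pi)) / (\<i> * of_int m) - cis (of_int m * 0) / (\<i> * of_int m))) {0..2*pi}"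
    by (rule fundamental_theorem_of_calculus) (use d in auto)
  moreover have "cis (of_int m * (2*pi)) = 1"
    using cis_multiple_2pi[of "of_int m"] by (simp add: mult.commute mult.left_commute)
  ultimately show ?thesis using False by simp
qed

lemma poly_coeff_integral:
  fixes r :: "complex poly" and k :: nat and z :: complex
  shows "((\<lambda>t. poly r (z * cis t) * cis (-(real k * t))) has_integral (2*pi * (coeff r k * z^k))) {0..2*pi}"
proof -
  have eq: "poly r (z * cis t) * cis (-(real k * t)) =
     (\<Sum>i\<le>degree r. (coeff r i * z^i) * cis (of_int (int i - int k) * t))" for t
  proof -
    have "poly r (z * cis t) * cis (-(real k * t)) = (\<Sum>i\<le>degree r. coeff r i * (z * cis t)^i * cis (-(real k * t)))"
      by (simp add: poly_altdef sum_distrib_right)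
    also have "\<dots> = (\<Sum>i\<le>degree r. (coeff r i * z^i) * cis (of_int (int i - int k) * t))"
    proof (rule sum.cong)
      fix i assume "i \<in> {..degree r}"
      have "(z * cis t)^i * cis (-(real k * t)) = z^i * cis (of_int (int i - int k) * t)"
      proof -
        have "(z * cis t)^i * cis (-(real k * t)) = z^i * (cis (real i * t) * cis (-(real k * t)))"
          by (simp add: power_mult_distrib Complex.DeMoivre)
        also have "\<dots> = z^i * cis (of_int (int i - int k) * t)"
          by (simp add: cis_mult algebra_simps)
        finally show ?thesis .
      qed
      then show "coeff r i * (z * cis t)^i * cis (-(real k * t)) = (coeff r i * z^i) * cis (of_int (int i - int k) * t)"
        by (simp add: mult.assoc)
    qed simp
    finally show ?thesis .
  qed
  have "((\<lambda>t. \<Sum>i\<le>degree r. (coeff r i * z^i) * cis (of_int (int i - int k) * t)) has_integral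
        (\<Sum>i\<le>degree r. (coeff r i * z^i) * (if int i - int k = 0 then 2*pi else 0))) {0..2*pi}"
    by (intro has_integral_sum finite_atMost ballI has_integral_mult_right cis_int_integral)
  moreover have "(\<Sum>i\<le>degree r. (coeff r i * z^i) * complex_of_real (if int i - int k = 0 then 2*pi else 0)) = 2*pi * (coeff r k * z^k)"
  proof (cases "k \<le> degree r")
    case True
    have "(\<Sum>i\<le>degree r. (coeff r i * z^i) * complex_of_real (if int i - int k = 0 then 2*pi else 0))
        = (\<Sum>i\<le>degree r. if i = k then (coeff r i * z^i) * (2*pi) else 0)"
      by (intro sum.cong) auto
    then show ?thesis using True by (simp add: sum.delta)
  next
    case False
    have "(\<Sum>i\<le>degree r. (coeff r i * z^i) * complex_of_real (if int i - int k = 0 then 2*pi else 0)) = 0"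
      using False by (intro sum.neutral) auto
    then show ?thesis using False by (simp add: coeff_eq_0)
  qed
  ultimately show ?thesis unfolding eq by simp
qed
lemma adm_nonneg:
  assumes "admissible_space X N"
  shows "\<forall>f\<in>X. N f \<ge> 0"
  using assms unfolding admissible_space_def by (elim conjE) assumption

lemma adm_zero:
  assumes "admissible_space X N"
  shows "\<forall>f\<in>X. N f = 0 \<longleftrightarrow> f = (\<lambda>z. 0)"
  using assms unfolding admissible_space_def by (elim conjE) assumption

lemma adm_scale:
  assumes "admissible_space X N"
  shows "\<forall>c. \<forall>f\<in>X. N (\<lambda>z. c * f z) = cmod c * N f"
  using assms unfolding admissible_space_def by (elim conjE) assumption

lemma adm_addX:
  assumes "admissible_space X N"
  shows "\<forall>f\<in>X. \<forall>g\<in>X. (\<lambda>z. f z + g z) \<in> X"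
  using assms unfolding admissible_space_def by (elim conjE) assumption

lemma adm_scaleX:
  assumes "admissible_space X N"
  shows "\<forall>c. \<forall>f\<in>X. (\<lambda>z. c * f z) \<in> X"
  using assms unfolding admissible_space_def by (elim conjE) assumption

lemma adm_tri:
  assumes "admissible_space X N"
  shows "\<forall>f\<in>X. \<forall>g\<in>X. N (\<lambda>z. f z + g z) \<le> N f + N g"
  using assms unfolding admissible_space_def by (elim conjE) assumption

lemma adm_entire:
  assumes "admissible_space X N"
  shows "\<forall>f. f holomorphic_on UNIV \<longrightarrow> restrict_D f \<in> X"
  using assms unfolding admissible_space_def by (elim conjE) assumption

lemma adm_conv:
  assumes "admissible_space X N"
  shows "\<forall>f\<in>X. \<forall>g :: real \<Rightarrow> complex. set_integrable lborel {0..2*pi} g \<longrightarrow>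
        (let h = restrict_D (\<lambda>z. (1 / (2*pi)) * (LINT t:{0..2*pi}|lborel. f (z * cis t) * g t))
         in h \<in> X \<and> N h \<le> (1 / (2*pi)) * (LINT t:{0..2*pi}|lborel. cmod (g t)) * N f)"
  using assms unfolding admissible_space_def by (elim conjE) assumption

lemma cont_set_integrable:
  fixes g :: "real \<Rightarrow> complex"
  assumes "continuous_on {0..2*pi} g"
  shows "set_integrable lborel {0..2*pi} g"
  unfolding set_integrable_def by (rule borel_integrable_compact) (use assms in auto)

lemma restrict_D_poly_in:
  assumes "admissible_space X N"
  shows "restrict_D (poly r) \<in> X"
proof -
  have "(\<lambda>z. poly r z) holomorphic_on UNIV" by (intro holomorphic_intros)
  then show ?thesis using adm_entire[OF assms] by blast
qed

lemma restrict_D_pow_in: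
  assumes "admissible_space X N"
  shows "restrict_D (\<lambda>z. z^k) \<in> X"
proof -
  have "(\<lambda>z. z^k) holomorphic_on UNIV" by (intro holomorphic_intros)
  then show ?thesis using adm_entire[OF assms] by blast
qed

lemma coeff_bound:
  assumes adm: "admissible_space X N"
  shows "cmod (coeff r k) * N (restrict_D (\<lambda>z. z^k)) \<le> N (restrict_D (poly r))"
proof -
  define F where "F = restrict_D (poly r)"
  define g where "g = (\<lambda>t::real. cis (-(real k * t)))"
  have FX: "F \<in> X" unfolding F_def by (rule restrict_D_poly_in[OF adm])
  have gi: "set_integrable lborel {0..2*pi} g"
    unfolding g_def by (intro cont_set_integrable continuous_intros)
  define h where "h = restrict_D (\<lambda>z. (1 / (2*pi)) * (LINT t:{0..2*pi}|lborel. F (z * cis t) * g t))"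
  have conv: "\<forall>f\<in>X. \<forall>g :: real \<Rightarrow> complex. set_integrable lborel {0..2*pi} g \<longrightarrow>
        (let h = restrict_D (\<lambda>z. (1 / (2*pi)) * (LINT t:{0..2*pi}|lborel. f (z * cis t) * g t))
         in h \<in> X \<and> N h \<le> (1 / (2*pi)) * (LINT t:{0..2*pi}|lborel. cmod (g t)) * N f)"
    by (rule adm_conv[OF adm])
  have hb: "N h \<le> (1 / (2*pi)) * (LINT t:{0..2*pi}|lborel. cmod (g t)) * N F"
    using conv FX gi unfolding h_def Let_def by blast
  have "(LINT t:{0..2*pi}|lborel. cmod (g t)) = (LINT t:{0..2*pi}|lborel. (1::real))"
    unfolding g_def by simp
  also have "\<dots> = 2*pi" by (subst set_integral_const) auto
  finally have L1: "(LINT t:{0..2*pi}|lborel. cmod (g t)) = 2*pi" .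
  have hN: "N h \<le> N F" using hb L1 by simp
  have heq: "h = (\<lambda>z. coeff r k * restrict_D (\<lambda>z. z^k) z)"
  proof
    fix z
    show "h z = coeff r k * restrict_D (\<lambda>z. z^k) z"
    proof (cases "z \<in> ball 0 1")
      case True
      have inb: "z * cis t \<in> ball 0 1" for t using True by (simp add: norm_mult)
      have "(LINT t:{0..2*pi}|lborel. F (z * cis t) * g t) = (LINT t:{0..2*pi}|lborel. poly r (z * cis t) * cis (-(real k * t)))"
        unfolding F_def g_def restrict_D_def using inb by simp
      also have "\<dots> = integral {0..2*pi} (\<lambda>t. poly r (z * cis t) * cis (-(real k * t)))"
        by (rule set_borel_integral_eq_integral) (intro cont_set_integrable continuous_intros)
      also have "\<dots> = 2*pi * (coeff r k * z^k)"
        by (rule integral_unique[OF poly_coeff_integral])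
      finally show ?thesis using True unfolding h_def restrict_D_def by simp
    next
      case False
      then show ?thesis unfolding h_def restrict_D_def by simp
    qed
  qed
  have "N h = cmod (coeff r k) * N (restrict_D (\<lambda>z. z^k))"
    using adm_scale[OF adm] restrict_D_pow_in[OF adm, of k] unfolding heq by blast
  then show ?thesis using hN unfolding F_def by simp
qed
lemma int_small_zero:
  fixes x :: real
  assumes "x \<in> \<int>" "\<bar>x\<bar> < 1"
  shows "x = 0"
  using assms by (auto elim!: Ints_cases)

theorem theorem5p4:
  fixes X :: "(complex \<Rightarrow> complex) set" and N :: "(complex \<Rightarrow> complex) \<Rightarrow> real"
    and f :: "complex \<Rightarrow> complex" and p :: "nat \<Rightarrow> complex poly"
  assumes "admissible_space X N"
    and "f \<in> X"
    and "\<not> (\<exists>q. f = restrict_D (poly q))"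
    and "\<forall>n. p n \<in> int_polys n"
    and "(\<lambda>n. N (\<lambda>z. f z - restrict_D (poly (p n)) z)) \<longlonglongrightarrow> 0"
  shows "liminf (\<lambda>n. ereal (N (restrict_D (\<lambda>z. z ^ n)))) = 0"
proof (rule ccontr)
  note adm = assms(1)
  assume ne: "liminf (\<lambda>n. ereal (N (restrict_D (\<lambda>z. z ^ n)))) \<noteq> 0"
  have nonneg: "\<And>g. g \<in> X \<Longrightarrow> N g \<ge> 0" using adm_nonneg[OF adm] by blast
  have zero: "\<And>g. g \<in> X \<Longrightarrow> N g = 0 \<longleftrightarrow> g = (\<lambda>z. 0)" using adm_zero[OF adm] by blast
  have scale: "\<And>c g. g \<in> X \<Longrightarrow> N (\<lambda>z. c * g z) = cmod c * N g" using adm_scale[OF adm] by blast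
  have addX: "\<And>g h. g \<in> X \<Longrightarrow> h \<in> X \<Longrightarrow> (\<lambda>z. g z + h z) \<in> X" using adm_addX[OF adm] by blast
  have scaleX: "\<And>c g. g \<in> X \<Longrightarrow> (\<lambda>z. c * g z) \<in> X" using adm_scaleX[OF adm] by blast
  have tri: "\<And>g h. g \<in> X \<Longrightarrow> h \<in> X \<Longrightarrow> N (\<lambda>z. g z + h z) \<le> N g + N h" using adm_tri[OF adm] by blast
  define A where "A n = (\<lambda>z. f z - restrict_D (poly (p n)) z)" for n
  have AX: "A n \<in> X" for n
  proof -
    have "A n = (\<lambda>z. f z + (-1) * restrict_D (poly (p n)) z)" unfolding A_def by simp
    then show ?thesis using addX scaleX assms(2) restrict_D_poly_in[OF adm] by metis
  qed
  have diff: "N (restrict_D (poly (p n - p m))) \<le> N (A m) + N (A n)" for n m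
  proof -
    have h1: "restrict_D (poly (p n - p m)) = (\<lambda>z. A m z + (-1) * A n z)"
      unfolding A_def restrict_D_def by (auto simp: poly_diff)
    have h2: "N (\<lambda>z. A m z + (-1) * A n z) \<le> N (A m) + N (\<lambda>z. (-1) * A n z)" using tri AX scaleX by blast
    have h3: "N (\<lambda>z. (-1) * A n z) = N (A n)" using scale[OF AX, of "-1" n] by (simp only: norm_minus_cancel norm_one mult_1)
    show ?thesis unfolding h1 using h2 h3 by linarith
  qed
  define L where "L = liminf (\<lambda>n. ereal (N (restrict_D (\<lambda>z. z ^ n))))"
  have powX: "restrict_D (\<lambda>z. z ^ k) \<in> X" for k by (rule restrict_D_pow_in[OF adm])
  have "0 \<le> L" unfolding L_def
    by (rule Liminf_bounded) (use nonneg powX in auto)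
  with ne have Lpos: "0 < L" unfolding L_def by auto
  obtain y where y: "0 < y" "y < L" using dense[OF Lpos] by blast
  define e where "e = real_of_ereal y"
  have ye: "y = ereal e" using y unfolding e_def by (cases y) auto
  have epos: "e > 0" using y ye by simp
  have "eventually (\<lambda>n. ereal (N (restrict_D (\<lambda>z. z ^ n))) > y) sequentially"
    using less_LiminfD[OF y(2)[unfolded L_def]] .
  then obtain K where K: "\<And>n. n \<ge> K \<Longrightarrow> e < N (restrict_D (\<lambda>z. z ^ n))"
    unfolding eventually_sequentially ye by auto
  have powpos: "N (restrict_D (\<lambda>z. z ^ k)) > 0" for k
  proof -
    have "restrict_D (\<lambda>z. z ^ k) (1/2) \<noteq> 0" unfolding restrict_D_def by simp
    then have "restrict_D (\<lambda>z. z ^ k) \<noteq> (\<lambda>z. 0)" by metis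
    then show ?thesis using zero[OF powX, of k] nonneg[OF powX, of k] by linarith
  qed
  define S where "S = insert e ((\<lambda>k. N (restrict_D (\<lambda>z. z ^ k))) ` {..<K})"
  define \<delta> where "\<delta> = Min S"
  have finS: "finite S" "S \<noteq> {}" unfolding S_def by auto
  have dpos: "\<delta> > 0" unfolding \<delta>_def using Min_gr_iff[OF finS] epos powpos unfolding S_def by auto
  have dle: "\<delta> \<le> N (restrict_D (\<lambda>z. z ^ k))" for k
  proof (cases "k < K")
    case True
    then show ?thesis unfolding \<delta>_def S_def by (intro Min_le) auto
  next
    case False
    have "\<delta> \<le> e" unfolding \<delta>_def S_def by (intro Min_le) auto
    then show ?thesis using K[of k] False by simp
  qed
  have AN: "(\<lambda>n. N (A n)) \<longlonglongrightarrow> 0" using assms(5) unfolding A_def .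
  have "eventually (\<lambda>n. N (A n) < \<delta>/2) sequentially"
    using order_tendstoD(2)[OF AN, of "\<delta>/2"] dpos by linarith
  then obtain M where M: "\<And>n. n \<ge> M \<Longrightarrow> N (A n) < \<delta>/2" unfolding eventually_sequentially by auto
  have peq: "p n = p M" if "n \<ge> M" for n
  proof (rule poly_eqI)
    fix k
    define c where "c = coeff (p n - p M) k"
    have "cmod c * N (restrict_D (\<lambda>z. z^k)) \<le> N (restrict_D (poly (p n - p M)))"
      unfolding c_def by (rule coeff_bound[OF adm])
    also have "\<dots> < \<delta>" using diff[of n M] M[of n] M[of M] that by simp
    finally have lt: "cmod c * N (restrict_D (\<lambda>z. z^k)) < \<delta>" .
    have c1: "cmod c < 1"
    proof (rule ccontr)
      assume "\<not> cmod c < 1"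
      then have "1 * N (restrict_D (\<lambda>z. z^k)) \<le> cmod c * N (restrict_D (\<lambda>z. z^k))"
        using nonneg[OF powX] by (intro mult_right_mono) auto
      then show False using lt dle[of k] by simp
    qed
    have g1: "gauss_int (coeff (p n) k)" "gauss_int (coeff (p M) k)"
      using assms(4) unfolding int_polys_def by auto
    have "Re c \<in> \<int>" "Im c \<in> \<int>" using g1 unfolding c_def gauss_int_def by auto
    moreover have "\<bar>Re c\<bar> < 1" "\<bar>Im c\<bar> < 1"
      using c1 abs_Re_le_cmod[of c] abs_Im_le_cmod[of c] by linarith+
    ultimately have "Re c = 0" "Im c = 0" using int_small_zero by blast+
    then have "c = 0" by (simp add: complex_eq_iff)
    then show "coeff (p n) k = coeff (p M) k" unfolding c_def by simp
  qed
  have ev: "\<forall>n\<ge>M. N (A n) = N (A M)"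
  proof (intro allI impI)
    fix n assume "n \<ge> M"
    then have "p n = p M" by (rule peq)
    then have "A n = A M" unfolding A_def by simp
    then show "N (A n) = N (A M)" by simp
  qed
  have "eventually (\<lambda>n. N (A n) = N (A M)) sequentially"
    unfolding eventually_sequentially using ev by blast
  from Lim_transform_eventually[OF AN this] have "(\<lambda>n. N (A M)) \<longlonglongrightarrow> 0" .
  then have "N (A M) = 0" by (simp add: LIMSEQ_const_iff)
  then have "A M = (\<lambda>z. 0)" using zero[OF AX, of M] by blast
  then have z0: "A M z = 0" for z by simp
  have "f = restrict_D (poly (p M))"
  proof
    fix z
    have "f z - restrict_D (poly (p M)) z = 0" using z0[of z] unfolding A_def .
    then show "f z = restrict_D (poly (p M)) z" by simp
  qed
  then show False using assms(3) by blast
qed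
end
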